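(* Let $1\le i<j\le n+1$ and let $\theta'$ and $\tilde{\theta}$ be as in the context. Then there exists $\tilde{v}\in GL(j+1-i,\mathbb{C})$ such that (1) $\tilde{\theta}=\mathrm{Ad}(\tilde{v}^{-1})\circ\theta_{j+1-i}\circ\mathrm{Ad}(\tilde{v})$, so that the fixed group $\tilde{K}=GL(j+1-i,\mathbb{C})^{\tilde{\theta}}$ is isomorphic to $K_{j+1-i}$; and (2) $\mathrm{Ad}(\tilde{v})\mathfrak{b}_{+,j+1-i}$ lies in the open $K_{j+1-i}$-orbit on the flag variety $\mathcal{B}_{j+1-i}$ of $\mathfrak{gl}(j+1-i,\mathbb{C})$.
   Context: $n\ge1$, $\mathfrak{g}=\mathfrak{gl}(n+1,\mathbb{C})$ with standard basis $e_1,\dots,e_{n+1}$ of $\mathbb{C}^{n+1}$. $\theta$ is conjugation by $c=\mathrm{diag}(1,\dots,1,-1)$. For a permutation $\pi$, its permutation matrix sends $e_k\mapsto e_{\pi(k)}$, and the cycle $(a_1\,a_2\dots a_r)$ sends $a_1\mapsto a_2\mapsto\dots\mapsto a_r\mapsto a_1$. Let $w$ be the permutation matrix of the cycle $(n+1\ n\ \dots\ i)$, $\sigma$ that of the cycle $(i+1\ i+2\ \dots\ j)$ (trivial if $j=i+1$), and $u$ the matrix with $u(e_i)=e_i+e_{i+1}$, $u(e_{i+1})=-e_i+e_{i+1}$, $u(e_k)=e_k$ for $k\ne i,i+1$. Put $v=wu\sigma$ and $\theta'=\mathrm{Ad}(v^{-1})\circ\theta\circ\mathrm{Ad}(v)$.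 The subalgebra of $\mathfrak{g}$ of matrices supported on rows and columns $i,\dots,j$, identified with $\mathfrak{gl}(j+1-i,\mathbb{C})$ via the ordered basis $e_i,\dots,e_j$, is $\theta'$-stable; $\tilde{\theta}$ is the restriction of $\theta'$ to it. For $m\ge1$, $\theta_m$ is conjugation by $\mathrm{diag}(1,\dots,1,-1)$ on $\mathfrak{gl}(m,\mathbb{C})$, $K_m=GL(m-1,\mathbb{C})\times GL(1,\mathbb{C})$ its fixed group (block diagonal invertible matrices), acting by conjugation on the flag variety $\mathcal{B}_m$ with a unique open orbit, and $\mathfrak{b}_{+,m}$ is the Borel subalgebra of upper triangular matrices in $\mathfrak{gl}(m,\mathbb{C})$. *)

theory Defs
  imports Complex_Main "Jordan_Normal_Form.Matrix"
begin

text \<open>Conventions: the paper's basis vector e_k (k = 1..N) is the JNF index k-1.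
  All matrices are complex N x N matrices in carrier_mat N N.\<close>

text \<open>Permutation matrix of pi (pi acting on paper indices 1..N): e_k maps to e_(pi k).\<close>
definition perm_mat :: "nat \<Rightarrow> (nat \<Rightarrow> nat) \<Rightarrow> complex mat" where
  "perm_mat N p = mat N N (\<lambda>(r, c). if Suc r = p (Suc c) then 1 else 0)"

definition w_perm :: "nat \<Rightarrow> nat \<Rightarrow> nat \<Rightarrow> nat" where
  "w_perm n i k = (if i < k \<and> k \<le> n + 1 then k - 1 else if k = i then n + 1 else k)"

definition sigma_perm :: "nat \<Rightarrow> nat \<Rightarrow> nat \<Rightarrow> nat" where
  "sigma_perm i j k = (if i + 1 \<le> k \<and> k < j then k + 1 else if k = j then i + 1 else k)"

text \<open>u(e_i) = e_i + e_(i+1), u(e_(i+1)) = -e_i + e_(i+1), u(e_k) = e_k otherwise.\<close>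
definition u_mat :: "nat \<Rightarrow> nat \<Rightarrow> complex mat" where
  "u_mat N i = mat N N (\<lambda>(r, c).
     if Suc c = i then (if Suc r = i \<or> Suc r = i + 1 then 1 else 0)
     else if Suc c = i + 1 then (if Suc r = i then -1 else if Suc r = i + 1 then 1 else 0)
     else (if r = c then 1 else 0))"

definition c_mat :: "nat \<Rightarrow> complex mat" where
  "c_mat N = mat N N (\<lambda>(r, c). if r = c then (if r = N - 1 then -1 else 1) else 0)"

definition minv :: "nat \<Rightarrow> complex mat \<Rightarrow> complex mat" where
  "minv N A = (SOME B. B \<in> carrier_mat N N \<and> A * B = 1\<^sub>m N \<and> B * A = 1\<^sub>m N)"

definition v_mat :: "nat \<Rightarrow> nat \<Rightarrow> nat \<Rightarrow> complex mat" where
  "v_mat n i j = perm_mat (n + 1) (w_perm n i) * u_mat (n + 1) i * perm_mat (n + 1) (sigma_perm i j)"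

text \<open>theta' = Ad(v^-1) o theta o Ad(v), with theta = Ad(c) on gl(n+1,C).\<close>
definition theta' :: "nat \<Rightarrow> nat \<Rightarrow> nat \<Rightarrow> complex mat \<Rightarrow> complex mat" where
  "theta' n i j X = (let v = v_mat n i j; vi = minv (n + 1) v; c = c_mat (n + 1)
                     in vi * (c * (v * X * vi) * c) * v)"

text \<open>Identification of gl(m,C) with matrices of gl(N,C) supported on rows and columns
  i..i+m-1 (paper indices), via the ordered basis e_i, ..., e_(i+m-1).\<close>
definition embed_block :: "nat \<Rightarrow> nat \<Rightarrow> nat \<Rightarrow> complex mat \<Rightarrow> complex mat" where
  "embed_block N i m Y = mat N N (\<lambda>(r, c).
     if i - 1 \<le> r \<and> r < i - 1 + m \<and> i - 1 \<le> c \<and> c < i - 1 + m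
     then Y $$ (r - (i - 1), c - (i - 1)) else 0)"

text \<open>K_m = GL(m-1) x GL(1), block diagonal invertible matrices.\<close>
definition K_grp :: "nat \<Rightarrow> complex mat set" where
  "K_grp m = {k \<in> carrier_mat m m. invertible_mat k \<and>
                 (\<forall>r < m - 1. k $$ (r, m - 1) = 0 \<and> k $$ (m - 1, r) = 0)}"

text \<open>B_m: invertible upper triangular matrices (the normalizer of b_+,m).\<close>
definition borel_grp :: "nat \<Rightarrow> complex mat set" where
  "borel_grp m = {b \<in> carrier_mat m m. invertible_mat b \<and>
                    (\<forall>r c. c < r \<longrightarrow> r < m \<longrightarrow> b $$ (r, c) = 0)}"

definition mat_open :: "nat \<Rightarrow> complex mat set \<Rightarrow> bool" where
  "mat_open m S \<longleftrightarrow> S \<subseteq> carrier_mat m m \<and>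
     (\<forall>A \<in> S. \<exists>e > 0. \<forall>B \<in> carrier_mat m m.
        (\<forall>r < m. \<forall>c < m. cmod (B $$ (r, c) - A $$ (r, c)) < e) \<longrightarrow> B \<in> S)"

text \<open>The Borel subalgebra Ad(g) b_+,m lies in the open K_m-orbit on B_m = GL(m)/B_m
  iff the K_m-orbit of gB_m is open in GL(m)/B_m (quotient topology), i.e. iff the
  saturated set K_m g B_m is open in GL(m,C).\<close>
definition in_open_K_orbit :: "nat \<Rightarrow> complex mat \<Rightarrow> bool" where
  "in_open_K_orbit m g \<longleftrightarrow>
     mat_open m {k * g * b | k b. k \<in> K_grp m \<and> b \<in> borel_grp m}"

end

theory Submission
  imports Defs "Jordan_Normal_Form.Determinant"
begin


lemma mult_entry:
  assumes "A \<in> carrier_mat n k" "B \<in> carrier_mat k m" "r < n" "c < m"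
  shows "(A * B) $$ (r, c) = (\<Sum>l<k. A $$ (r, l) * B $$ (l, c))"
  using assms by (auto simp: scalar_prod_def lessThan_atLeast0 intro!: sum.cong)

lemma sum_supp1:
  fixes k a :: nat
  assumes "a < k" "\<And>l. l < k \<Longrightarrow> l \<noteq> a \<Longrightarrow> f l = 0"
  shows "(\<Sum>l<k. f l) = (f a :: 'a::comm_monoid_add)"
proof -
  have "(\<Sum>l<k. f l) = (\<Sum>l\<in>{a}. f l)"
    by (rule sum.mono_neutral_right) (use assms in auto)
  then show ?thesis by simp
qed

lemma sum_supp2:
  fixes k a b :: nat
  assumes "a < k" "b < k" "a \<noteq> b" "\<And>l. l < k \<Longrightarrow> l \<noteq> a \<Longrightarrow> l \<noteq> b \<Longrightarrow> f l = 0"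
  shows "(\<Sum>l<k. f l) = (f a + f b :: 'a::comm_monoid_add)"
proof -
  have "(\<Sum>l<k. f l) = (\<Sum>l\<in>{a,b}. f l)"
    by (rule sum.mono_neutral_right) (use assms in auto)
  then show ?thesis using assms by simp
qed

lemma perm_right:
  assumes q: "\<And>k. 1 \<le> k \<Longrightarrow> k \<le> N \<Longrightarrow> 1 \<le> q k \<and> q k \<le> N"
    and A: "A \<in> carrier_mat n N"
  shows "A * perm_mat N q = mat n N (\<lambda>(r,c). A $$ (r, q (Suc c) - 1))"
proof (rule eq_matI)
  fix r c assume rc: "r < dim_row (mat n N (\<lambda>(r,c). A $$ (r, q (Suc c) - 1)))"
     "c < dim_col (mat n N (\<lambda>(r,c). A $$ (r, q (Suc c) - 1)))"
  then have r: "r < n" and c: "c < N" by auto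
  have qc: "1 \<le> q (Suc c)" "q (Suc c) \<le> N" using q[of "Suc c"] c by auto
  have "(A * perm_mat N q) $$ (r, c) = (\<Sum>l<N. A $$ (r, l) * perm_mat N q $$ (l, c))"
    by (rule mult_entry[OF A _ r c]) (simp add: perm_mat_def)
  also have "\<dots> = A $$ (r, q (Suc c) - 1) * perm_mat N q $$ (q (Suc c) - 1, c)"
    by (rule sum_supp1) (use qc c in \<open>auto simp: perm_mat_def\<close>)
  also have "\<dots> = A $$ (r, q (Suc c) - 1)" using qc c by (simp add: perm_mat_def)
  finally show "(A * perm_mat N q) $$ (r, c) = mat n N (\<lambda>(r,c). A $$ (r, q (Suc c) - 1)) $$ (r, c)"
    using r c by simp
qed (use A in \<open>auto simp: perm_mat_def\<close>)

lemma perm_left: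
  assumes q: "\<And>k. 1 \<le> k \<Longrightarrow> k \<le> N \<Longrightarrow> 1 \<le> q k \<and> q k \<le> N \<and> q (q k) = k"
    and A: "A \<in> carrier_mat N n"
  shows "perm_mat N q * A = mat N n (\<lambda>(r,c). A $$ (q (Suc r) - 1, c))"
proof (rule eq_matI)
  fix r c assume rc: "r < dim_row (mat N n (\<lambda>(r,c). A $$ (q (Suc r) - 1, c)))"
     "c < dim_col (mat N n (\<lambda>(r,c). A $$ (q (Suc r) - 1, c)))"
  then have r: "r < N" and c: "c < n" by auto
  have qc: "1 \<le> q (Suc r)" "q (Suc r) \<le> N" "q (q (Suc r)) = Suc r" using q[of "Suc r"] r by auto
  have "(perm_mat N q * A) $$ (r, c) = (\<Sum>l<N. perm_mat N q $$ (r, l) * A $$ (l, c))"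
    by (rule mult_entry[OF _ A r c]) (simp add: perm_mat_def)
  also have "\<dots> = perm_mat N q $$ (r, q (Suc r) - 1) * A $$ (q (Suc r) - 1, c)"
  proof (rule sum_supp1)
    show "q (Suc r) - 1 < N" using qc by auto
    fix l assume l: "l < N" "l \<noteq> q (Suc r) - 1"
    have "Suc r \<noteq> q (Suc l)"
    proof
      assume "Suc r = q (Suc l)"
      then have "q (Suc r) = Suc l" using q[of "Suc l"] l by auto
      then show False using l by auto
    qed
    then show "perm_mat N q $$ (r, l) * A $$ (l, c) = 0" using l r by (simp add: perm_mat_def)
  qed
  also have "\<dots> = A $$ (q (Suc r) - 1, c)" using qc r by (simp add: perm_mat_def)
  finally show "(perm_mat N q * A) $$ (r, c) = mat N n (\<lambda>(r,c). A $$ (q (Suc r) - 1, c)) $$ (r, c)"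
    using r c by simp
qed (use A in \<open>auto simp: perm_mat_def\<close>)


definition tr :: "nat \<Rightarrow> nat \<Rightarrow> nat \<Rightarrow> nat" where
  "tr a b k = (if k = a then b else if k = b then a else k)"

definition dmat :: "nat \<Rightarrow> (nat \<Rightarrow> complex) \<Rightarrow> complex mat" where
  "dmat N d = mat N N (\<lambda>(r,c). if r = c then d r else 0)"

lemma dmat_left:
  assumes A: "A \<in> carrier_mat N n"
  shows "dmat N d * A = mat N n (\<lambda>(r,c). d r * A $$ (r,c))"
proof (rule eq_matI)
  fix r c assume "r < dim_row (mat N n (\<lambda>(r,c). d r * A $$ (r,c)))"
    "c < dim_col (mat N n (\<lambda>(r,c). d r * A $$ (r,c)))"
  then have r: "r < N" and c: "c < n" by auto
  have "(dmat N d * A) $$ (r, c) = (\<Sum>l<N. dmat N d $$ (r, l) * A $$ (l, c))"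
    by (rule mult_entry[OF _ A r c]) (simp add: dmat_def)
  also have "\<dots> = dmat N d $$ (r, r) * A $$ (r, c)"
    by (rule sum_supp1) (use r in \<open>auto simp: dmat_def\<close>)
  finally show "(dmat N d * A) $$ (r, c) = mat N n (\<lambda>(r,c). d r * A $$ (r,c)) $$ (r, c)"
    using r c by (simp add: dmat_def)
qed (use A in \<open>auto simp: dmat_def\<close>)

lemma dmat_right:
  assumes A: "A \<in> carrier_mat n N"
  shows "A * dmat N d = mat n N (\<lambda>(r,c). A $$ (r,c) * d c)"
proof (rule eq_matI)
  fix r c assume "r < dim_row (mat n N (\<lambda>(r,c). A $$ (r,c) * d c))"
    "c < dim_col (mat n N (\<lambda>(r,c). A $$ (r,c) * d c))"
  then have r: "r < n" and c: "c < N" by auto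
  have "(A * dmat N d) $$ (r, c) = (\<Sum>l<N. A $$ (r, l) * dmat N d $$ (l, c))"
    by (rule mult_entry[OF A _ r c]) (simp add: dmat_def)
  also have "\<dots> = A $$ (r, c) * dmat N d $$ (c, c)"
    by (rule sum_supp1) (use c in \<open>auto simp: dmat_def\<close>)
  finally show "(A * dmat N d) $$ (r, c) = mat n N (\<lambda>(r,c). A $$ (r,c) * d c) $$ (r, c)"
    using r c by (simp add: dmat_def)
qed (use A in \<open>auto simp: dmat_def\<close>)

lemma c_mat_dmat: "c_mat N = dmat N (\<lambda>r. if r = N - 1 then -1 else 1)"
  by (rule eq_matI) (auto simp: c_mat_def dmat_def)

lemma perm_mat_carrier[simp]: "perm_mat N p \<in> carrier_mat N N"
  by (simp add: perm_mat_def)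
lemma u_mat_carrier[simp]: "u_mat N i \<in> carrier_mat N N"
  by (simp add: u_mat_def)
lemma c_mat_carrier[simp]: "c_mat N \<in> carrier_mat N N"
  by (simp add: c_mat_def)
lemma dmat_carrier[simp]: "dmat N d \<in> carrier_mat N N"
  by (simp add: dmat_def)

lemma perm_mat_one:
  assumes "\<And>k. 1 \<le> k \<Longrightarrow> k \<le> N \<Longrightarrow> p k = k"
  shows "perm_mat N p = 1\<^sub>m N"
  by (rule eq_matI) (use assms in \<open>auto simp: perm_mat_def\<close>)

lemma perm_mat_comp:
  assumes q: "\<And>k. 1 \<le> k \<Longrightarrow> k \<le> N \<Longrightarrow> 1 \<le> q k \<and> q k \<le> N"
  shows "perm_mat N p * perm_mat N q = perm_mat N (p \<circ> q)"
proof -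
  have "perm_mat N p * perm_mat N q = mat N N (\<lambda>(r,c). perm_mat N p $$ (r, q (Suc c) - 1))"
    by (rule perm_right[OF q]) auto
  also have "\<dots> = perm_mat N (p \<circ> q)"
  proof (rule eq_matI)
    fix r c assume "r < dim_row (perm_mat N (p \<circ> q))" "c < dim_col (perm_mat N (p \<circ> q))"
    then have r: "r < N" and c: "c < N" by (auto simp: perm_mat_def)
    have "1 \<le> q (Suc c)" "q (Suc c) \<le> N" using q[of "Suc c"] c by auto
    then show "mat N N (\<lambda>(r,c). perm_mat N p $$ (r, q (Suc c) - 1)) $$ (r, c) = perm_mat N (p \<circ> q) $$ (r, c)"
      using r c by (simp add: perm_mat_def)
  qed (auto simp: perm_mat_def)
  finally show ?thesis .
qed



lemma det_ne_of_inv: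
  assumes "A \<in> carrier_mat N N" "B \<in> carrier_mat N N" "A * B = 1\<^sub>m N"
  shows "det A \<noteq> (0::complex)"
  using det_mult[OF assms(1,2)] assms(3) by auto

lemma exists_inv:
  assumes A: "A \<in> carrier_mat N N" and d: "det A \<noteq> (0::complex)"
  shows "\<exists>B. B \<in> carrier_mat N N \<and> A * B = 1\<^sub>m N \<and> B * A = 1\<^sub>m N"
  using det_non_zero_imp_unit[OF A d, of undefined]
  unfolding Units_def by (auto simp: ring_mat_simps)

lemma minv_props:
  assumes A: "A \<in> carrier_mat N N" and d: "det A \<noteq> 0"
  shows "minv N A \<in> carrier_mat N N \<and> A * minv N A = 1\<^sub>m N \<and> minv N A * A = 1\<^sub>m N"
  unfolding minv_def by (rule someI_ex[OF exists_inv[OF A d]])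

lemma sq_assoc: "A \<in> carrier_mat N N \<Longrightarrow> B \<in> carrier_mat N N \<Longrightarrow> C \<in> carrier_mat N N \<Longrightarrow> A * B * C = A * (B * C)"
  by (rule assoc_mult_mat)
lemma sq_carrier: "A \<in> carrier_mat N N \<Longrightarrow> B \<in> carrier_mat N N \<Longrightarrow> A * B \<in> carrier_mat N N"
  by (rule mult_carrier_mat)

lemma conj_lemma:
  assumes A: "A \<in> carrier_mat N N" and Ai: "Ai \<in> carrier_mat N N" and X: "X \<in> carrier_mat N N"
    and C: "C \<in> carrier_mat N N" and T: "T \<in> carrier_mat N N"
    and AAi: "A * Ai = 1\<^sub>m N" and AiA: "Ai * A = 1\<^sub>m N" and CA: "C * A = A * T"
  shows "Ai * (C * (A * X * Ai) * C) * A = T * X * (T :: complex mat)"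
proof -
  have t1: "Ai * C * A = T"
  proof -
    have "Ai * C * A = Ai * (C * A)" using Ai C A by (simp add: assoc_mult_mat)
    also have "\<dots> = Ai * (A * T)" by (simp add: CA)
    also have "\<dots> = (Ai * A) * T" using Ai A T by (simp add: assoc_mult_mat)
    finally show ?thesis using AiA T by simp
  qed
  have t2: "Ai * C = T * Ai"
  proof -
    have "Ai * C = Ai * C * (A * Ai)" using Ai C AAi by simp
    also have "\<dots> = (Ai * C * A) * Ai"
      by (rule assoc_mult_mat[symmetric]) (use Ai C A in auto)
    finally show ?thesis using t1 by simp
  qed
  have "Ai * (C * (A * X * Ai) * C) * A = (Ai * C) * (A * X * Ai) * (C * A)"
    using A Ai X C by (simp add: sq_assoc sq_carrier)
  also have "\<dots> = T * Ai * (A * X * Ai) * (A * T)" by (simp add: t2 CA)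
  also have "\<dots> = T * (Ai * A) * X * (Ai * A) * T"
    using A Ai X T by (simp add: sq_assoc sq_carrier)
  also have "\<dots> = T * X * T" using AiA T X by simp
  finally show ?thesis .
qed

context
  fixes n i j :: nat
  assumes i1: "1 \<le> i" and ij: "i < j" and jn: "j \<le> n + 1"
begin

lemma stepa: "c_mat (n+1) * perm_mat (n+1) (w_perm n i)
   = perm_mat (n+1) (w_perm n i) * dmat (n+1) (\<lambda>r. if r = i - 1 then -1 else 1)"
  unfolding c_mat_dmat
  apply (subst dmat_left[OF perm_mat_carrier])
  apply (subst dmat_right[OF perm_mat_carrier])
  apply (rule eq_matI)
  using i1 ij jn by (auto simp: perm_mat_def w_perm_def)

lemma stepb: "dmat (n+1) (\<lambda>r. if r = i - 1 then -1 else 1) * u_mat (n+1) i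
   = u_mat (n+1) i * perm_mat (n+1) (tr i (i+1))"
  apply (subst dmat_left[OF u_mat_carrier])
  apply (subst perm_right[OF _ u_mat_carrier])
  using i1 ij jn apply (auto simp: tr_def)[2]
  apply (rule eq_matI)
  using i1 ij jn by (auto simp: u_mat_def tr_def)

lemma trsig: "tr i (i+1) (sigma_perm i j k) = sigma_perm i j (tr i j k)"
  using i1 ij by (auto simp: tr_def sigma_perm_def)

lemma stepc: "perm_mat (n+1) (tr i (i+1)) * perm_mat (n+1) (sigma_perm i j)
   = perm_mat (n+1) (sigma_perm i j) * perm_mat (n+1) (tr i j)"
  apply (subst perm_mat_comp)
  using i1 ij jn apply (auto simp: sigma_perm_def)[1]
  apply (subst perm_mat_comp)
  using i1 ij jn apply (auto simp: tr_def)[1]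
  by (metis (no_types) trsig comp_apply ext)

definition winv :: "nat \<Rightarrow> nat" where
  "winv k = (if i \<le> k \<and> k \<le> n then k + 1 else if k = n + 1 then i else k)"
definition sinv :: "nat \<Rightarrow> nat" where
  "sinv k = (if i + 2 \<le> k \<and> k \<le> j then k - 1 else if k = i + 1 then j else k)"

lemma W_inv: "perm_mat (n+1) (w_perm n i) * perm_mat (n+1) winv = 1\<^sub>m (n+1)"
  apply (subst perm_mat_comp)
  using i1 ij jn apply (auto simp: winv_def)[1]
  apply (rule perm_mat_one)
  using i1 ij jn by (auto simp: winv_def w_perm_def)

lemma S_inv: "perm_mat (n+1) (sigma_perm i j) * perm_mat (n+1) sinv = 1\<^sub>m (n+1)"
  apply (subst perm_mat_comp)
  using i1 ij jn apply (auto simp: sinv_def)[1]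
  apply (rule perm_mat_one)
  using i1 ij jn by (auto simp: sinv_def sigma_perm_def)

definition Ui :: "complex mat" where
  "Ui = mat (n+1) (n+1) (\<lambda>(r, c).
     if Suc c = i then (if Suc r = i then 1/2 else if Suc r = i + 1 then -1/2 else 0)
     else if Suc c = i + 1 then (if Suc r = i \<or> Suc r = i + 1 then 1/2 else 0)
     else (if r = c then 1 else 0))"

lemma U_inv: "u_mat (n+1) i * Ui = 1\<^sub>m (n+1)"
proof (rule eq_matI)
  fix r c assume "r < dim_row (1\<^sub>m (n+1) :: complex mat)" "c < dim_col (1\<^sub>m (n+1) :: complex mat)"
  then have r: "r < n+1" and c: "c < n+1" by auto
  have "(u_mat (n+1) i * Ui) $$ (r, c) = (\<Sum>l<n+1. u_mat (n+1) i $$ (r, l) * Ui $$ (l, c))"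
    by (rule mult_entry[OF u_mat_carrier _ r c]) (simp add: Ui_def)
  also have "\<dots> = 1\<^sub>m (n+1) $$ (r, c)"
  proof (cases "Suc c = i \<or> Suc c = i + 1")
    case True
    have "(\<Sum>l<n+1. u_mat (n+1) i $$ (r, l) * Ui $$ (l, c)) =
       u_mat (n+1) i $$ (r, i - 1) * Ui $$ (i - 1, c) + u_mat (n+1) i $$ (r, i) * Ui $$ (i, c)"
      by (rule sum_supp2) (use True i1 ij jn c r in \<open>auto simp: Ui_def\<close>)
    also have "\<dots> = 1\<^sub>m (n+1) $$ (r, c)"
      using True i1 ij jn c r by (auto simp: Ui_def u_mat_def)
    finally show ?thesis .
  next
    case False
    have "(\<Sum>l<n+1. u_mat (n+1) i $$ (r, l) * Ui $$ (l, c)) =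
       u_mat (n+1) i $$ (r, c) * Ui $$ (c, c)"
      by (rule sum_supp1) (use False i1 ij jn c r in \<open>auto simp: Ui_def\<close>)
    also have "\<dots> = 1\<^sub>m (n+1) $$ (r, c)"
      using False i1 ij jn c r by (auto simp: Ui_def u_mat_def)
    finally show ?thesis .
  qed
  finally show "(u_mat (n+1) i * Ui) $$ (r, c) = 1\<^sub>m (n+1) $$ (r, c)" .
qed (auto simp: u_mat_def Ui_def)

lemma v_carrier: "v_mat n i j \<in> carrier_mat (n+1) (n+1)"
  unfolding v_mat_def by (simp add: sq_carrier)

lemma det_v: "det (v_mat n i j) \<noteq> 0"
proof -
  have "det (perm_mat (n+1) (w_perm n i)) \<noteq> 0"
    by (rule det_ne_of_inv[OF _ _ W_inv]) auto
  moreover have "det (perm_mat (n+1) (sigma_perm i j)) \<noteq> 0"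
    by (rule det_ne_of_inv[OF _ _ S_inv]) auto
  moreover have "det (u_mat (n+1) i) \<noteq> 0"
    by (rule det_ne_of_inv[OF _ _ U_inv]) (auto simp: Ui_def)
  ultimately show ?thesis unfolding v_mat_def
    by (simp add: det_mult[of _ "n+1"] sq_carrier)
qed

lemma cV: "c_mat (n+1) * v_mat n i j = v_mat n i j * perm_mat (n+1) (tr i j)"
proof -
  let ?c = "c_mat (n+1)" and ?W = "perm_mat (n+1) (w_perm n i)" and ?U = "u_mat (n+1) i"
    and ?S = "perm_mat (n+1) (sigma_perm i j)" and ?D = "dmat (n+1) (\<lambda>r. if r = i - 1 then -1 else 1)"
    and ?T1 = "perm_mat (n+1) (tr i (i+1))" and ?T2 = "perm_mat (n+1) (tr i j)"
  have "?c * v_mat n i j = (?c * ?W) * ?U * ?S"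
    unfolding v_mat_def by (simp add: sq_assoc[of _ "n+1"] sq_carrier)
  also have "\<dots> = (?W * ?D) * ?U * ?S" by (simp only: stepa)
  also have "\<dots> = ?W * (?D * ?U) * ?S" by (simp add: sq_assoc[of _ "n+1"] sq_carrier)
  also have "\<dots> = ?W * (?U * ?T1) * ?S" by (simp only: stepb)
  also have "\<dots> = ?W * ?U * (?T1 * ?S)" by (simp add: sq_assoc[of _ "n+1"] sq_carrier)
  also have "\<dots> = ?W * ?U * (?S * ?T2)" by (simp only: stepc)
  also have "\<dots> = v_mat n i j * ?T2"
    unfolding v_mat_def by (simp add: sq_assoc[of _ "n+1"] sq_carrier)
  finally show ?thesis .
qed

lemma theta'_T:
  assumes X: "X \<in> carrier_mat (n+1) (n+1)"
  shows "theta' n i j X = perm_mat (n+1) (tr i j) * X * perm_mat (n+1) (tr i j)"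
proof -
  note mp = minv_props[OF v_carrier det_v]
  show ?thesis unfolding theta'_def Let_def
    by (rule conj_lemma[OF v_carrier _ X c_mat_carrier perm_mat_carrier _ _ cV]) (use mp in auto)
qed

lemma tr_range: "1 \<le> k \<Longrightarrow> k \<le> n+1 \<Longrightarrow> 1 \<le> tr i j k \<and> tr i j k \<le> n+1 \<and> tr i j (tr i j k) = k"
  using i1 ij jn by (auto simp: tr_def)

lemma tr_lt: "r < Suc n \<Longrightarrow> tr i j (Suc r) - Suc 0 < Suc n"
  using i1 ij jn by (auto simp: tr_def)

lemma idx:
  assumes r: "r < n + 1"
  shows "(i - 1 \<le> tr i j (Suc r) - 1 \<and> tr i j (Suc r) - 1 < i - 1 + (j + 1 - i)) = (i - 1 \<le> r \<and> r < i - 1 + (j + 1 - i))"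
    and "i - 1 \<le> r \<Longrightarrow> r < i - 1 + (j + 1 - i) \<Longrightarrow>
       tr i j (Suc r) - 1 - (i - 1) = tr 1 (j + 1 - i) (Suc (r - (i - 1))) - 1"
  using i1 ij jn r by (auto simp: tr_def)

lemma embed_conj:
  assumes Y: "Y \<in> carrier_mat (j+1-i) (j+1-i)"
  shows "perm_mat (n+1) (tr i j) * embed_block (n+1) i (j+1-i) Y * perm_mat (n+1) (tr i j)
    = embed_block (n+1) i (j+1-i) (perm_mat (j+1-i) (tr 1 (j+1-i)) * Y * perm_mat (j+1-i) (tr 1 (j+1-i)))"
proof -
  let ?m = "j+1-i"
  let ?E = "embed_block (n+1) i ?m Y"
  have E: "?E \<in> carrier_mat (n+1) (n+1)" by (simp add: embed_block_def)
  have s1: "perm_mat (n+1) (tr i j) * ?E * perm_mat (n+1) (tr i j)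
     = mat (n+1) (n+1) (\<lambda>(r,c). ?E $$ (tr i j (Suc r) - 1, tr i j (Suc c) - 1))"
    apply (subst sq_assoc[OF perm_mat_carrier E perm_mat_carrier])
    apply (subst perm_right[OF _ E])
     apply (use tr_range in blast)
    apply (subst perm_left)
      apply (use tr_range in blast)
     apply (rule mat_carrier)
    apply (rule eq_matI)
    using tr_range by (auto simp: tr_lt)
  have trm: "1 \<le> k \<Longrightarrow> k \<le> ?m \<Longrightarrow> 1 \<le> tr 1 ?m k \<and> tr 1 ?m k \<le> ?m \<and> tr 1 ?m (tr 1 ?m k) = k" for k
    using ij by (auto simp: tr_def)
  have trm_lt: "r < Suc j - i \<Longrightarrow> tr (Suc 0) (Suc j - i) (Suc r) - Suc 0 < Suc j - i" for r
    using ij by (auto simp: tr_def)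
  have s2: "perm_mat ?m (tr 1 ?m) * Y * perm_mat ?m (tr 1 ?m)
     = mat ?m ?m (\<lambda>(r,c). Y $$ (tr 1 ?m (Suc r) - 1, tr 1 ?m (Suc c) - 1))"
    apply (subst sq_assoc[OF perm_mat_carrier Y perm_mat_carrier])
    apply (subst perm_right[OF _ Y])
     apply (use trm in blast)
    apply (subst perm_left)
      apply (use trm in blast)
     apply (rule mat_carrier)
    apply (rule eq_matI)
    using trm trm_lt by auto
  show ?thesis
    unfolding s1 s2
  proof (rule eq_matI)
    fix r c assume "r < dim_row (embed_block (n+1) i ?m (mat ?m ?m (\<lambda>(r,c). Y $$ (tr 1 ?m (Suc r) - 1, tr 1 ?m (Suc c) - 1))))"
      "c < dim_col (embed_block (n+1) i ?m (mat ?m ?m (\<lambda>(r,c). Y $$ (tr 1 ?m (Suc r) - 1, tr 1 ?m (Suc c) - 1))))"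
    then have r: "r < n+1" and c: "c < n+1" by (auto simp: embed_block_def)
    have r': "tr i j (Suc r) - 1 < n + 1" and c': "tr i j (Suc c) - 1 < n + 1"
      using tr_range[of "Suc r"] tr_range[of "Suc c"] r c by auto
    let ?a = "i - 1" and ?r' = "tr i j (Suc r) - 1" and ?c' = "tr i j (Suc c) - 1"
    have L: "mat (n+1) (n+1) (\<lambda>(r,c). ?E $$ (tr i j (Suc r) - 1, tr i j (Suc c) - 1)) $$ (r, c)
      = (if ?a \<le> ?r' \<and> ?r' < ?a + ?m \<and> ?a \<le> ?c' \<and> ?c' < ?a + ?m then Y $$ (?r' - ?a, ?c' - ?a) else 0)"
      using r c r' c' by (simp only: embed_block_def index_mat split, (simp)?)
    have R: "embed_block (n+1) i ?m (mat ?m ?m (\<lambda>(r,c). Y $$ (tr 1 ?m (Suc r) - 1, tr 1 ?m (Suc c) - 1))) $$ (r, c)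
      = (if ?a \<le> r \<and> r < ?a + ?m \<and> ?a \<le> c \<and> c < ?a + ?m then
          Y $$ (tr 1 ?m (Suc (r - ?a)) - 1, tr 1 ?m (Suc (c - ?a)) - 1) else 0)"
    proof (cases "?a \<le> r \<and> r < ?a + ?m \<and> ?a \<le> c \<and> c < ?a + ?m")
      case True
      then have "r - ?a < ?m" "c - ?a < ?m" by auto
      then show ?thesis using r c True by (simp only: embed_block_def index_mat split if_True, (simp)?)
    next
      case False
      then show ?thesis using r c by (simp only: embed_block_def index_mat split if_False, (simp)?)
    qed
    show "mat (n+1) (n+1) (\<lambda>(r,c). ?E $$ (tr i j (Suc r) - 1, tr i j (Suc c) - 1)) $$ (r, c) =
      embed_block (n+1) i ?m (mat ?m ?m (\<lambda>(r,c). Y $$ (tr 1 ?m (Suc r) - 1, tr 1 ?m (Suc c) - 1))) $$ (r, c)"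
    proof -
      have e1: "(?a \<le> ?r' \<and> ?r' < ?a + ?m \<and> ?a \<le> ?c' \<and> ?c' < ?a + ?m) = (?a \<le> r \<and> r < ?a + ?m \<and> ?a \<le> c \<and> c < ?a + ?m)"
        using idx(1)[OF r] idx(1)[OF c] by blast
      show ?thesis
      proof (cases "?a \<le> r \<and> r < ?a + ?m \<and> ?a \<le> c \<and> c < ?a + ?m")
        case True
        then have "?r' - ?a = tr 1 ?m (Suc (r - ?a)) - 1" "?c' - ?a = tr 1 ?m (Suc (c - ?a)) - 1"
          using idx(2)[OF r] idx(2)[OF c] by blast+
        then show ?thesis unfolding L R e1 using True by (simp only: if_True)
      next
        case False
        then show ?thesis unfolding L R e1 by (simp only: if_False)
      qed
    qed
  qed (auto simp: embed_block_def)
qed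

end


definition vtm :: "nat \<Rightarrow> complex mat" where
  "vtm m = mat m m (\<lambda>(r,c). if c = 0 then (if r = 0 \<or> r = m - 1 then 1 else 0)
     else if c = m - 1 then (if r = 0 then 1 else if r = m - 1 then -1 else 0)
     else (if r = c then 1 else 0))"

definition vtim :: "nat \<Rightarrow> complex mat" where
  "vtim m = mat m m (\<lambda>(r,c). if c = 0 then (if r = 0 \<or> r = m - 1 then 1/2 else 0)
     else if c = m - 1 then (if r = 0 then 1/2 else if r = m - 1 then -1/2 else 0)
     else (if r = c then 1 else 0))"

lemma vtm_carrier[simp]: "vtm m \<in> carrier_mat m m" by (simp add: vtm_def)
lemma vtim_carrier[simp]: "vtim m \<in> carrier_mat m m" by (simp add: vtim_def)

lemma vt_inv1:
  assumes m: "2 \<le> m"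
  shows "vtm m * vtim m = 1\<^sub>m m"
proof (rule eq_matI)
  fix r c assume "r < dim_row (1\<^sub>m m :: complex mat)" "c < dim_col (1\<^sub>m m :: complex mat)"
  then have r: "r < m" and c: "c < m" by auto
  have "(vtm m * vtim m) $$ (r, c) = (\<Sum>l<m. vtm m $$ (r, l) * vtim m $$ (l, c))"
    by (rule mult_entry[OF vtm_carrier vtim_carrier r c])
  also have "\<dots> = 1\<^sub>m m $$ (r, c)"
  proof (cases "c = 0 \<or> c = m - 1")
    case True
    have "(\<Sum>l<m. vtm m $$ (r, l) * vtim m $$ (l, c)) =
       vtm m $$ (r, 0) * vtim m $$ (0, c) + vtm m $$ (r, m - 1) * vtim m $$ (m - 1, c)"
      by (rule sum_supp2) (use True m c r in \<open>auto simp: vtim_def\<close>)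
    also have "\<dots> = 1\<^sub>m m $$ (r, c)"
      using True m c r by (auto simp: vtim_def vtm_def)
    finally show ?thesis .
  next
    case False
    have "(\<Sum>l<m. vtm m $$ (r, l) * vtim m $$ (l, c)) = vtm m $$ (r, c) * vtim m $$ (c, c)"
      by (rule sum_supp1) (use False m c r in \<open>auto simp: vtim_def\<close>)
    also have "\<dots> = 1\<^sub>m m $$ (r, c)"
      using False m c r by (auto simp: vtim_def vtm_def)
    finally show ?thesis .
  qed
  finally show "(vtm m * vtim m) $$ (r, c) = 1\<^sub>m m $$ (r, c)" .
qed (auto simp: vtm_def vtim_def)

lemma vt_inv2:
  assumes m: "2 \<le> m"
  shows "vtim m * vtm m = 1\<^sub>m m"
  by (rule mat_mult_left_right_inverse[OF vtm_carrier vtim_carrier vt_inv1[OF m]])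

lemma c_vt:
  assumes m: "2 \<le> m"
  shows "c_mat m * vtm m = vtm m * perm_mat m (tr 1 m)"
  unfolding c_mat_dmat
  apply (subst dmat_left[OF vtm_carrier])
  apply (subst perm_right[OF _ vtm_carrier])
  using m apply (auto simp: tr_def)[1]
  apply (rule eq_matI)
  using m by (auto simp: vtm_def tr_def)

lemma part1:
  assumes i1: "1 \<le> i" and ij: "i < j" and jn: "j \<le> n + 1"
    and Y: "Y \<in> carrier_mat (j + 1 - i) (j + 1 - i)"
  shows "theta' n i j (embed_block (n + 1) i (j + 1 - i) Y) =
         embed_block (n + 1) i (j + 1 - i)
           (vtim (j + 1 - i) * (c_mat (j + 1 - i) * (vtm (j + 1 - i) * Y * vtim (j + 1 - i)) * c_mat (j + 1 - i)) * vtm (j + 1 - i))"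
proof -
  have m: "2 \<le> j + 1 - i" using ij by auto
  have E: "embed_block (n + 1) i (j + 1 - i) Y \<in> carrier_mat (n+1) (n+1)" by (simp add: embed_block_def)
  show ?thesis
    unfolding theta'_T[OF i1 ij jn E] embed_conj[OF i1 ij jn Y]
    by (rule arg_cong[where f = "embed_block (n + 1) i (j + 1 - i)"],
        rule conj_lemma[symmetric, OF vtm_carrier vtim_carrier Y c_mat_carrier perm_mat_carrier
          vt_inv1[OF m] vt_inv2[OF m] c_vt[OF m]])
qed



definition nbhd :: "nat \<Rightarrow> complex mat \<Rightarrow> real \<Rightarrow> complex mat set" where
  "nbhd m A d = {B. B \<in> carrier_mat m m \<and> (\<forall>r<m. \<forall>c<m. cmod (B $$ (r, c) - A $$ (r, c)) < d)}"

definition nearF :: "nat \<Rightarrow> complex mat \<Rightarrow> complex mat filter" where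
  "nearF m A = (INF d\<in>{0<..}. principal (nbhd m A d))"

lemma ev_nearF: "eventually P (nearF m A) \<longleftrightarrow> (\<exists>d>0. \<forall>B \<in> nbhd m A d. P B)"
  unfolding nearF_def
proof (subst eventually_INF_base)
  show "{0<..} \<noteq> ({}::real set)" by auto
  fix a b :: real assume "a \<in> {0<..}" "b \<in> {0<..}"
  then show "\<exists>x\<in>{0<..}. principal (nbhd m A x) \<le> inf (principal (nbhd m A a)) (principal (nbhd m A b))"
    by (intro bexI[of _ "min a b"]) (auto simp: nbhd_def)
qed (auto simp: eventually_principal)

lemma entry_tendsto:
  assumes "r < m" "c < m"
  shows "((\<lambda>B. B $$ (r, c)) \<longlongrightarrow> A $$ (r, c)) (nearF m A)"
  unfolding tendsto_iff dist_norm ev_nearF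
  using assms by (auto simp: nbhd_def)

lemma det_formula:
  "det (mat k k (\<lambda>(r,c). B $$ (r,c))) =
     (\<Sum>p \<in> {p. p permutes {0..<k}}. signof p * (\<Prod>i = 0..<k. B $$ (i, p i)))"
  unfolding det_def'[OF mat_carrier]
  by (rule sum.cong[OF refl], rule arg_cong[where f = "\<lambda>x. _ * x"], rule prod.cong[OF refl])
     (auto dest: permutes_in_image)

lemma perm_lt: "p permutes {0..<(k::nat)} \<Longrightarrow> i < k \<Longrightarrow> p i < k"
  using permutes_in_image[of p "{0..<k}" i] by simp

lemma det_sub_tendsto:
  assumes km: "k \<le> m"
  shows "((\<lambda>B. det (mat k k (\<lambda>(r,c). B $$ (r,c)))) \<longlongrightarrow> det (mat k k (\<lambda>(r,c). A $$ (r,c)))) (nearF m A)"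
  unfolding det_formula
proof (intro tendsto_sum tendsto_mult tendsto_const tendsto_prod)
  fix p i assume p: "p \<in> {p. p permutes {0..<k}}" and i: "i \<in> {0..<k}"
  have im: "i < m" using i km by simp
  have "p i < k" by (rule perm_lt) (use p i in auto)
  then have "p i < m" using km by linarith
  with im show "((\<lambda>B. B $$ (i, p i)) \<longlongrightarrow> A $$ (i, p i)) (nearF m A)"
    by (rule entry_tendsto)
qed

lemma det_eq_mat: "B \<in> carrier_mat m m \<Longrightarrow> mat m m (\<lambda>(r,c). B $$ (r,c)) = B"
  by (rule eq_matI) auto
lemma det_eq_mat': "B \<in> carrier_mat m m \<Longrightarrow> mat m m (($$) B) = B"
  by (rule eq_matI) auto

definition Cond :: "nat \<Rightarrow> complex mat \<Rightarrow> bool" where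
  "Cond m g \<longleftrightarrow> g \<in> carrier_mat m m \<and> det g \<noteq> 0 \<and>
     det (mat (m - 1) (m - 1) (\<lambda>(r,c). g $$ (r,c))) \<noteq> 0 \<and> g $$ (m - 1, 0) \<noteq> 0"

lemma Cond_open:
  assumes "Cond m A" "0 < m"
  shows "\<exists>d>0. \<forall>B \<in> nbhd m A d. Cond m B"
proof -
  have A: "A \<in> carrier_mat m m" using assms by (simp add: Cond_def)
  have e1: "eventually (\<lambda>B. B \<in> carrier_mat m m) (nearF m A)"
    unfolding ev_nearF by (auto simp: nbhd_def intro: exI[of _ 1])
  have "eventually (\<lambda>B. det (mat m m (\<lambda>(r,c). B $$ (r,c))) \<noteq> 0) (nearF m A)"
    by (rule tendsto_imp_eventually_ne[OF det_sub_tendsto[OF le_refl]])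
       (use assms A in \<open>simp add: Cond_def det_eq_mat det_eq_mat'\<close>)
  moreover have "eventually (\<lambda>B. det (mat (m-1) (m-1) (\<lambda>(r,c). B $$ (r,c))) \<noteq> 0) (nearF m A)"
    by (rule tendsto_imp_eventually_ne[OF det_sub_tendsto]) (use assms in \<open>auto simp: Cond_def\<close>)
  moreover have "eventually (\<lambda>B. B $$ (m-1, 0) \<noteq> 0) (nearF m A)"
    by (rule tendsto_imp_eventually_ne[OF entry_tendsto]) (use assms in \<open>auto simp: Cond_def\<close>)
  ultimately have "eventually (Cond m) (nearF m A)"
    using e1 by eventually_elim (auto simp: Cond_def det_eq_mat det_eq_mat')
  then show ?thesis unfolding ev_nearF .
qed



definition ev :: "nat \<Rightarrow> complex mat" where "ev p = mat p 1 (\<lambda>(a,_). if a = 0 then 1 else 0)"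
definition evT :: "nat \<Rightarrow> complex mat" where "evT p = mat 1 p (\<lambda>(_,b). if b = 0 then 1 else 0)"
definition mone :: "complex mat" where "mone = mat 1 1 (\<lambda>_. -1)"

lemma ev_carrier[simp]: "ev p \<in> carrier_mat p 1" by (simp add: ev_def)
lemma evT_carrier[simp]: "evT p \<in> carrier_mat 1 p" by (simp add: evT_def)
lemma mone_carrier[simp]: "mone \<in> carrier_mat 1 1" by (simp add: mone_def)
lemma blk_carrier'[simp]: "ev p \<in> carrier_mat p (Suc 0)" "evT p \<in> carrier_mat (Suc 0) p" "mone \<in> carrier_mat (Suc 0) (Suc 0)"
  by (auto simp: ev_def evT_def mone_def)
lemma blk_dims[simp]: "dim_row (ev p) = p" "dim_col (ev p) = 1" "dim_row (evT p) = 1" "dim_col (evT p) = p"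
  "dim_row mone = 1" "dim_col mone = 1"
  by (auto simp: ev_def evT_def mone_def)

lemma vt_block:
  assumes p: "0 < p"
  shows "vtm (p+1) = four_block_mat (1\<^sub>m p) (ev p) (evT p) mone"
  by (rule eq_matI) (use p in \<open>auto simp: vtm_def ev_def evT_def mone_def\<close>)

lemma inv_of_det:
  assumes A: "A \<in> carrier_mat n n" and d: "det A \<noteq> (0::complex)"
  shows "invertible_mat A"
proof -
  obtain B where B: "B \<in> carrier_mat n n" "A * B = 1\<^sub>m n" "B * A = 1\<^sub>m n"
    using exists_inv[OF A d] by blast
  then show ?thesis using A unfolding invertible_mat_def inverts_mat_def square_mat.simps
    by auto
qed

lemma det_of_inv:
  assumes A: "A \<in> carrier_mat n n" and i: "invertible_mat (A :: complex mat)"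
  shows "det A \<noteq> 0"
proof -
  obtain B where B: "A * B = 1\<^sub>m n" "B * A = 1\<^sub>m (dim_row B)"
    using i A unfolding invertible_mat_def inverts_mat_def by auto
  have "dim_col B = n" using arg_cong[OF B(1), of dim_col] by simp
  moreover have "dim_row B = n" using arg_cong[OF B(2), of dim_col] A by simp
  ultimately have "B \<in> carrier_mat n n" by auto
  then show ?thesis using det_ne_of_inv[OF A _ B(1)] by blast
qed

lemma decomp:
  assumes p: "0 < p" and C: "Cond (p+1) g"
  shows "\<exists>k b. k \<in> K_grp (p+1) \<and> b \<in> borel_grp (p+1) \<and> g = k * vtm (p+1) * b"
proof -
  have g: "g \<in> carrier_mat (p+1) (p+1)" and dg: "det g \<noteq> 0"
    and dP0: "det (mat p p (\<lambda>(r,c). g $$ (r,c))) \<noteq> 0" and g0: "g $$ (p, 0) \<noteq> 0"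
    using C by (auto simp: Cond_def)
  obtain P q r s where sb: "split_block g p p = (P,q,r,s)" by (cases "split_block g p p") auto
  note spl = split_block[OF sb, of 1 1]
  have P: "P \<in> carrier_mat p p" and q: "q \<in> carrier_mat p 1" and r: "r \<in> carrier_mat 1 p"
    and s: "s \<in> carrier_mat 1 1" and gb: "g = four_block_mat P q r s"
    using spl g by auto
  have Pdef: "P = mat p p (\<lambda>(r,c). g $$ (r,c))" and rdef: "r = mat 1 p (\<lambda>(i,j). g $$ (i + p, j))"
    using sb g unfolding split_block_def Let_def by (auto simp: case_prod_beta')
  have dP: "det P \<noteq> 0" using dP0 Pdef by simp
  obtain Q where Q: "Q \<in> carrier_mat p p" "P * Q = 1\<^sub>m p" "Q * P = 1\<^sub>m p"
    using exists_inv[OF P dP] by blast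
  define r0 where "r0 = r $$ (0,0)"
  have r0: "r0 \<noteq> 0" using g0 p unfolding r0_def rdef by simp
  define D where "D = mat p p (\<lambda>(a,b). if a = 0 then r $$ (0, b) else (if a = b then 1 else 0))"
  define Dinv where "Dinv = mat p p (\<lambda>(a,b). if a = 0 then (if b = 0 then 1 / r0 else - r $$ (0, b) / r0)
      else (if a = b then 1 else 0))"
  have D: "D \<in> carrier_mat p p" and Di: "Dinv \<in> carrier_mat p p" by (auto simp: D_def Dinv_def)
  have DDi: "D * Dinv = 1\<^sub>m p"
  proof (rule eq_matI)
    fix a c assume "a < dim_row (1\<^sub>m p :: complex mat)" "c < dim_col (1\<^sub>m p :: complex mat)"
    then have a: "a < p" and c: "c < p" by auto
    have "(D * Dinv) $$ (a, c) = (\<Sum>l<p. D $$ (a, l) * Dinv $$ (l, c))"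
      by (rule mult_entry[OF D Di a c])
    also have "\<dots> = 1\<^sub>m p $$ (a, c)"
    proof (cases "a = 0")
      case False
      have "(\<Sum>l<p. D $$ (a, l) * Dinv $$ (l, c)) = D $$ (a, a) * Dinv $$ (a, c)"
        by (rule sum_supp1) (use False a c in \<open>auto simp: D_def\<close>)
      then show ?thesis using False a c by (simp add: D_def Dinv_def)
    next
      case True
      show ?thesis
      proof (cases "c = 0")
        case True
        have "(\<Sum>l<p. D $$ (a, l) * Dinv $$ (l, c)) = D $$ (a, 0) * Dinv $$ (0, c)"
          by (rule sum_supp1) (use True p a c in \<open>auto simp: Dinv_def\<close>)
        then show ?thesis using True \<open>a = 0\<close> p r0 by (simp add: D_def Dinv_def r0_def)
      next
        case False
        have "(\<Sum>l<p. D $$ (a, l) * Dinv $$ (l, c)) = D $$ (a, 0) * Dinv $$ (0, c) + D $$ (a, c) * Dinv $$ (c, c)"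
          by (rule sum_supp2) (use False p a c in \<open>auto simp: Dinv_def\<close>)
        then show ?thesis using False \<open>a = 0\<close> p r0 c by (simp add: D_def Dinv_def r0_def)
      qed
    qed
    finally show "(D * Dinv) $$ (a, c) = 1\<^sub>m p $$ (a, c)" .
  qed (auto simp: D_def Dinv_def)
  have DiD: "Dinv * D = 1\<^sub>m p" by (rule mat_mult_left_right_inverse[OF D Di DDi])
  define x where "x = D * Q * q"
  have x: "x \<in> carrier_mat p 1" using D Q q by (simp add: x_def)
  define bb where "bb = (x $$ (0,0) - s $$ (0,0)) / 2"
  define \<beta> where "\<beta> = mat p 1 (\<lambda>(a,_). x $$ (a,0) - (if a = 0 then bb else 0))"
  define \<beta>m where "\<beta>m = mat 1 1 (\<lambda>_. bb)"
  have \<beta>: "\<beta> \<in> carrier_mat p 1" and \<beta>m: "\<beta>m \<in> carrier_mat 1 1" by (auto simp: \<beta>_def \<beta>m_def)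
  define k where "k = four_block_mat (P * Dinv) (0\<^sub>m p 1) (0\<^sub>m 1 p) (1\<^sub>m 1)"
  define b where "b = four_block_mat D \<beta> (0\<^sub>m 1 p) \<beta>m"
  have k: "k \<in> carrier_mat (p+1) (p+1)" and b: "b \<in> carrier_mat (p+1) (p+1)"
    using P Di D \<beta> \<beta>m by (auto simp: k_def b_def)
  have kvt: "k * vtm (p+1) = four_block_mat (P * Dinv) (P * Dinv * ev p) (evT p) mone"
  proof -
    have "k * vtm (p+1) = four_block_mat (P * Dinv * 1\<^sub>m p + 0\<^sub>m p 1 * evT p) (P * Dinv * ev p + 0\<^sub>m p 1 * mone)
        (0\<^sub>m 1 p * 1\<^sub>m p + 1\<^sub>m 1 * evT p) (0\<^sub>m 1 p * ev p + 1\<^sub>m 1 * mone)"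
      unfolding k_def vt_block[OF p]
      by (rule mult_four_block_mat[OF _ _ _ _ one_carrier_mat ev_carrier evT_carrier mone_carrier])
         (use P Di in auto)
    also have "\<dots> = four_block_mat (P * Dinv) (P * Dinv * ev p) (evT p) mone"
    proof -
      have "P * Dinv * ev p \<in> carrier_mat p (Suc 0)"
        using P Di by (metis One_nat_def ev_carrier mult_carrier_mat)
      then show ?thesis using P Di by simp
    qed
    finally show ?thesis .
  qed
  have e1: "\<beta> + ev p * \<beta>m = x"
    by (rule eq_matI) (use x p in \<open>auto simp: \<beta>_def \<beta>m_def ev_def scalar_prod_def\<close>)
  have e2: "evT p * D = r"
  proof (rule eq_matI)
    fix a c assume "a < dim_row r" "c < dim_col r"
    then have a: "a = 0" and c: "c < p" using r by auto
    have "(evT p * D) $$ (a, c) = (\<Sum>l<p. evT p $$ (a, l) * D $$ (l, c))"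
      by (rule mult_entry[OF evT_carrier D]) (use a c in auto)
    also have "\<dots> = evT p $$ (a, 0) * D $$ (0, c)"
      by (rule sum_supp1) (use a c p in \<open>auto simp: evT_def\<close>)
    finally show "(evT p * D) $$ (a, c) = r $$ (a, c)" using a c p by (simp add: evT_def D_def)
  qed (use r D in auto)
  have e3: "evT p * \<beta> + mone * \<beta>m = s"
  proof (rule eq_matI)
    fix a c assume "a < dim_row s" "c < dim_col s"
    then have a: "a = 0" and c: "c = 0" using s by auto
    have "(evT p * \<beta>) $$ (a, c) = (\<Sum>l<p. evT p $$ (a, l) * \<beta> $$ (l, c))"
      by (rule mult_entry[OF evT_carrier \<beta>]) (use a c in auto)
    also have "\<dots> = evT p $$ (a, 0) * \<beta> $$ (0, c)"
      by (rule sum_supp1) (use a c p in \<open>auto simp: evT_def\<close>)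
    finally have U: "(evT p * \<beta>) $$ (a, c) = x $$ (0,0) - bb" using a c p by (simp add: evT_def \<beta>_def)
    have W: "(mone * \<beta>m) $$ (a, c) = - bb" using a c by (simp add: mone_def \<beta>m_def scalar_prod_def)
    have "(evT p * \<beta> + mone * \<beta>m) $$ (a, c) = (evT p * \<beta>) $$ (a, c) + (mone * \<beta>m) $$ (a, c)"
      by (rule index_add_mat(1)) (use a c \<beta>m in auto)
    also have "\<dots> = (x $$ (0,0) - bb) + (- bb)" by (simp only: U W)
    also have "\<dots> = s $$ (a, c)" using a c by (simp add: bb_def field_simps)
    finally show "(evT p * \<beta> + mone * \<beta>m) $$ (a, c) = s $$ (a, c)" .
  qed (use s \<beta>m in auto)
  have e4: "P * Dinv * \<beta> + P * Dinv * ev p * \<beta>m = q"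
  proof -
    have "P * Dinv * \<beta> + P * Dinv * ev p * \<beta>m = P * Dinv * \<beta> + P * Dinv * (ev p * \<beta>m)"
      using assoc_mult_mat[OF mult_carrier_mat[OF P Di] ev_carrier \<beta>m] by simp
    also have "\<dots> = P * Dinv * (\<beta> + ev p * \<beta>m)"
      by (rule mult_add_distrib_mat[symmetric]) (use P Di \<beta> \<beta>m in auto)
    also have "\<dots> = P * Dinv * (D * Q * q)" by (simp add: e1 x_def)
    also have "\<dots> = q"
    proof -
      have Qq: "Q * q \<in> carrier_mat p 1" using Q q by simp
      have a1: "D * Q * q = D * (Q * q)" by (rule assoc_mult_mat[OF D Q(1) q])
      have a2: "P * Dinv * (D * (Q * q)) = P * (Dinv * (D * (Q * q)))"
        by (rule assoc_mult_mat[OF P Di mult_carrier_mat[OF D Qq]])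
      have a3: "Dinv * (D * (Q * q)) = Dinv * D * (Q * q)"
        by (rule assoc_mult_mat[OF Di D Qq, symmetric])
      have a4: "P * (Q * q) = P * Q * q" by (rule assoc_mult_mat[OF P Q(1) q, symmetric])
      show ?thesis unfolding a1 a2 a3 DiD using Qq q a4 Q by simp
    qed
    finally show ?thesis .
  qed
  have e5: "P * Dinv * D = P" using P Di D by (simp add: assoc_mult_mat[of _ p p] DiD)
  have gkb: "g = k * vtm (p+1) * b"
  proof -
    have "k * vtm (p+1) * b = four_block_mat (P * Dinv * D + P * Dinv * ev p * 0\<^sub>m 1 p) (P * Dinv * \<beta> + P * Dinv * ev p * \<beta>m)
        (evT p * D + mone * 0\<^sub>m 1 p) (evT p * \<beta> + mone * \<beta>m)"
      unfolding kvt b_def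
      by (rule mult_four_block_mat) (use P Di D \<beta> \<beta>m in auto)
    also have "\<dots> = four_block_mat P q r s"
      using e2 e3 e4 e5 P Di D r by simp
    finally show ?thesis using gb by simp
  qed
  have "det g = det k * det (vtm (p+1)) * det b"
    unfolding gkb using k b by (simp add: det_mult[of _ "p+1"])
  then have dk: "det k \<noteq> 0" and db: "det b \<noteq> 0" using dg by auto
  have "k \<in> K_grp (p+1)"
    unfolding K_grp_def using k inv_of_det[OF k dk] P Di by (auto simp: k_def)
  moreover have "b \<in> borel_grp (p+1)"
    unfolding borel_grp_def using b inv_of_det[OF b db] D \<beta> \<beta>m by (auto simp: b_def D_def)
  ultimately show ?thesis using gkb by blast
qed



lemma det1: "A \<in> carrier_mat 1 1 \<Longrightarrow> det A = A $$ (0,0)"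
  by (subst det_upper_triangular[of A 1]) (auto simp: upper_triangular_def prod_list_diag_prod)

lemma orb_cond:
  assumes p: "0 < p" and kK: "k \<in> K_grp (p+1)" and bB: "b \<in> borel_grp (p+1)"
  shows "Cond (p+1) (k * vtm (p+1) * b)"
proof -
  have k: "k \<in> carrier_mat (p+1) (p+1)" and ik: "invertible_mat k"
    and kz: "\<And>r. r < p \<Longrightarrow> k $$ (r, p) = 0 \<and> k $$ (p, r) = 0"
    using kK by (auto simp: K_grp_def)
  have b: "b \<in> carrier_mat (p+1) (p+1)" and ib: "invertible_mat b"
    and bz: "\<And>r c. c < r \<Longrightarrow> r < p + 1 \<Longrightarrow> b $$ (r, c) = 0"
    using bB by (auto simp: borel_grp_def)
  obtain K1 K2 K3 K4 where sk: "split_block k p p = (K1,K2,K3,K4)" by (cases "split_block k p p") auto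
  obtain B1 B2 B3 B4 where sb: "split_block b p p = (B1,B2,B3,B4)" by (cases "split_block b p p") auto
  note splk = split_block[OF sk, of 1 1] and splb = split_block[OF sb, of 1 1]
  have K1: "K1 \<in> carrier_mat p p" and K4: "K4 \<in> carrier_mat 1 1" and kb: "k = four_block_mat K1 K2 K3 K4"
    using splk k by auto
  have B1: "B1 \<in> carrier_mat p p" and B2: "B2 \<in> carrier_mat p 1" and B4: "B4 \<in> carrier_mat 1 1"
    and bb: "b = four_block_mat B1 B2 B3 B4"
    using splb b by auto
  have K2d: "K2 = mat p 1 (\<lambda>(i,j). k $$ (i, j + p))" and K3d: "K3 = mat 1 p (\<lambda>(i,j). k $$ (i + p, j))"
    and K4d: "K4 = mat 1 1 (\<lambda>(i,j). k $$ (i + p, j + p))"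
    using sk k unfolding split_block_def Let_def by auto
  have B1d: "B1 = mat p p (\<lambda>(i,j). b $$ (i,j))" and B3d: "B3 = mat 1 p (\<lambda>(i,j). b $$ (i + p, j))"
    using sb b unfolding split_block_def Let_def by (auto simp: case_prod_beta')
  have K2z: "K2 = 0\<^sub>m p 1" unfolding K2d by (rule eq_matI) (auto simp: kz)
  have K3z: "K3 = 0\<^sub>m 1 p" unfolding K3d by (rule eq_matI) (auto simp: kz)
  have B3z: "B3 = 0\<^sub>m 1 p" unfolding B3d by (rule eq_matI) (auto simp: bz)
  have dk: "det k \<noteq> 0" by (rule det_of_inv[OF k ik])
  have db: "det b \<noteq> 0" by (rule det_of_inv[OF b ib])
  have "det k = det K1 * det K4"
    unfolding kb by (rule det_four_block_mat_lower_left_zero[OF K1 _ K3z K4]) (simp add: K2z)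
  then have dK1: "det K1 \<noteq> 0" and dK4: "K4 $$ (0,0) \<noteq> 0" using dk det1[OF K4] by auto
  have utb: "upper_triangular b" using b bz by (auto simp: upper_triangular_def)
  have utB1: "upper_triangular B1" using B1 bz by (auto simp: upper_triangular_def B1d)
  have "det b = (\<Prod>i = 0..<p+1. b $$ (i,i))"
    using det_upper_triangular[OF utb b] b by (simp add: prod_list_diag_prod)
  also have "\<dots> = (\<Prod>i = 0..<p. b $$ (i,i)) * b $$ (p,p)" by simp
  finally have dbp: "(\<Prod>i = 0..<p. b $$ (i,i)) \<noteq> 0" using db by auto
  have "det B1 = (\<Prod>i = 0..<p. b $$ (i,i))"
    using det_upper_triangular[OF utB1 B1] B1 by (simp add: prod_list_diag_prod B1d)
  then have dB1: "det B1 \<noteq> 0" using dbp by simp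
  have b00: "b $$ (0,0) \<noteq> 0" using dbp p by (auto simp: prod_zero_iff)
  have vtc: "vtm (p+1) = four_block_mat (1\<^sub>m p) (ev p) (evT p) mone" by (rule vt_block[OF p])
  have K1e: "K1 * ev p \<in> carrier_mat p (Suc 0)" using K1 by (metis One_nat_def ev_carrier mult_carrier_mat)
  have K4m: "K4 * mone \<in> carrier_mat (Suc 0) (Suc 0)" using K4 by (metis One_nat_def mone_carrier mult_carrier_mat)
  have K4e: "K4 * evT p \<in> carrier_mat (Suc 0) p" using K4 by (metis One_nat_def evT_carrier mult_carrier_mat)
  have kvt: "k * vtm (p+1) = four_block_mat K1 (K1 * ev p) (K4 * evT p) (K4 * mone)"
  proof -
    have "k * vtm (p+1) = four_block_mat (K1 * 1\<^sub>m p + 0\<^sub>m p 1 * evT p) (K1 * ev p + 0\<^sub>m p 1 * mone)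
        (0\<^sub>m 1 p * 1\<^sub>m p + K4 * evT p) (0\<^sub>m 1 p * ev p + K4 * mone)"
      unfolding kb K2z K3z vtc
      by (rule mult_four_block_mat[OF _ _ _ _ one_carrier_mat ev_carrier evT_carrier mone_carrier])
         (use K1 K4 in auto)
    also have "\<dots> = four_block_mat K1 (K1 * ev p) (K4 * evT p) (K4 * mone)"
      using K1 K4 K1e K4m K4e by simp
    finally show ?thesis .
  qed
  have K1B1: "K1 * B1 \<in> carrier_mat p p" using K1 B1 by simp
  have gb: "k * vtm (p+1) * b = four_block_mat (K1 * B1 + K1 * ev p * 0\<^sub>m 1 p) (K1 * B2 + K1 * ev p * B4)
        (K4 * evT p * B1 + K4 * mone * 0\<^sub>m 1 p) (K4 * evT p * B2 + K4 * mone * B4)"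
    unfolding kvt bb B3z
    by (rule mult_four_block_mat) (use K1 K4 B1 B2 B4 K1e K4m K4e in auto)
  have g: "k * vtm (p+1) * b \<in> carrier_mat (p+1) (p+1)"
    by (rule mult_carrier_mat[OF mult_carrier_mat[OF k vtm_carrier] b])
  have minor: "mat p p (\<lambda>(r,c). (k * vtm (p+1) * b) $$ (r,c)) = K1 * B1"
  proof (rule eq_matI)
    fix r c assume "r < dim_row (K1 * B1)" "c < dim_col (K1 * B1)"
    then have r: "r < p" and c: "c < p" using K1 B1 by auto
    have "(k * vtm (p+1) * b) $$ (r,c) = (K1 * B1 + K1 * ev p * 0\<^sub>m 1 p) $$ (r,c)"
      unfolding gb using r c carrier_matD[OF K1] carrier_matD[OF B1] carrier_matD[OF K4] carrier_matD[OF B2] carrier_matD[OF B4] by simp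
    also have "\<dots> = (K1 * B1) $$ (r, c)" using K1B1 K1e K1 by simp
    finally show "mat p p (\<lambda>(r,c). (k * vtm (p+1) * b) $$ (r,c)) $$ (r, c) = (K1 * B1) $$ (r, c)"
      using r c by simp
  qed (use K1 B1 in auto)
  have K4eT: "K4 * evT p = mat 1 p (\<lambda>(_,l). K4 $$ (0,0) * (if l = 0 then 1 else 0))"
    by (rule eq_matI) (use K4 in \<open>auto simp: evT_def scalar_prod_def\<close>)
  have g0: "(k * vtm (p+1) * b) $$ (p, 0) = K4 $$ (0,0) * b $$ (0,0)"
  proof -
    have "(k * vtm (p+1) * b) $$ (p, 0) = (K4 * evT p * B1 + K4 * mone * 0\<^sub>m 1 p) $$ (0, 0)"
      unfolding gb using p carrier_matD[OF K1] carrier_matD[OF B1] carrier_matD[OF K4] carrier_matD[OF B2] carrier_matD[OF B4] by simp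
    also have "\<dots> = (K4 * evT p * B1) $$ (0, 0)" using K4e B1 K4m carrier_matD[OF K4] p by simp
    also have "\<dots> = (\<Sum>l<p. (K4 * evT p) $$ (0, l) * B1 $$ (l, 0))"
      by (rule mult_entry[OF K4e B1]) (use p in auto)
    also have "\<dots> = (K4 * evT p) $$ (0, 0) * B1 $$ (0, 0)"
      by (rule sum_supp1) (use p in \<open>auto simp: K4eT\<close>)
    also have "\<dots> = K4 $$ (0,0) * b $$ (0,0)" using p by (simp add: K4eT B1d)
    finally show ?thesis .
  qed
  have dv: "det (vtm (p+1)) \<noteq> 0"
    by (rule det_ne_of_inv[OF vtm_carrier vtim_carrier vt_inv1]) (use p in auto)
  have "det (k * vtm (p+1) * b) = det k * det (vtm (p+1)) * det b"
    using k b by (simp add: det_mult[of _ "p+1"])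
  then have "det (k * vtm (p+1) * b) \<noteq> 0" using dk db dv by simp
  then show ?thesis unfolding Cond_def
    using g minor g0 dK1 dB1 dK4 b00 by (simp add: det_mult[OF K1 B1])
qed



lemma part2:
  assumes m: "2 \<le> m"
  shows "in_open_K_orbit m (vtm m)"
proof -
  obtain p where mp: "m = p + 1" and p: "0 < p" using m by (metis Suc_eq_plus1 Suc_le_D less_Suc_eq_0_disj not_less_eq_eq numeral_2_eq_2 zero_less_Suc)
  let ?S = "{k * vtm m * b | k b. k \<in> K_grp m \<and> b \<in> borel_grp m}"
  have sub: "?S \<subseteq> carrier_mat m m"
  proof
    fix g assume "g \<in> ?S"
    then obtain k b where g: "g = k * vtm m * b" and k: "k \<in> K_grp m" and b: "b \<in> borel_grp m" by blast
    have "k \<in> carrier_mat m m" "b \<in> carrier_mat m m" using k b by (auto simp: K_grp_def borel_grp_def)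
    then show "g \<in> carrier_mat m m" unfolding g
      by (metis mult_carrier_mat vtm_carrier)
  qed
  have "\<exists>e>0. \<forall>B \<in> carrier_mat m m. (\<forall>r<m. \<forall>c<m. cmod (B $$ (r, c) - A $$ (r, c)) < e) \<longrightarrow> B \<in> ?S"
    if A: "A \<in> ?S" for A
  proof -
    obtain k b where g: "A = k * vtm m * b" and k: "k \<in> K_grp m" and b: "b \<in> borel_grp m" using A by blast
    have "Cond m A" unfolding g mp by (rule orb_cond[OF p]) (use k b mp in auto)
    then obtain d where d: "d > 0" "\<forall>B \<in> nbhd m A d. Cond m B" using Cond_open[of m A] mp by auto
    show ?thesis
    proof (intro exI[of _ d] conjI ballI impI)
      show "0 < d" by (rule d(1))
      fix B assume "B \<in> carrier_mat m m" "\<forall>r<m. \<forall>c<m. cmod (B $$ (r, c) - A $$ (r, c)) < d"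
      then have "Cond m B" using d(2) by (auto simp: nbhd_def)
      then have "\<exists>k b. k \<in> K_grp (p+1) \<and> b \<in> borel_grp (p+1) \<and> B = k * vtm (p+1) * b"
        using decomp[OF p] mp by simp
      then show "B \<in> ?S" using mp by blast
    qed
  qed
  then show ?thesis unfolding in_open_K_orbit_def mat_open_def using sub by blast
qed

theorem lemma3p5:
  fixes n i j :: nat
  assumes "1 \<le> i" and "i < j" and "j \<le> n + 1"
  shows "\<exists>vt vti. vt \<in> carrier_mat (j + 1 - i) (j + 1 - i) \<and>
                  vti \<in> carrier_mat (j + 1 - i) (j + 1 - i) \<and>
                  vt * vti = 1\<^sub>m (j + 1 - i) \<and> vti * vt = 1\<^sub>m (j + 1 - i) \<and>
                  (\<forall>Y \<in> carrier_mat (j + 1 - i) (j + 1 - i).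
                     theta' n i j (embed_block (n + 1) i (j + 1 - i) Y) =
                     embed_block (n + 1) i (j + 1 - i)
                       (vti * (c_mat (j + 1 - i) * (vt * Y * vti) * c_mat (j + 1 - i)) * vt)) \<and>
                  in_open_K_orbit (j + 1 - i) vt"
proof -
  have m: "2 \<le> j + 1 - i" using assms by auto
  show ?thesis
    apply (rule exI[of _ "vtm (j + 1 - i)"], rule exI[of _ "vtim (j + 1 - i)"])
    using vt_inv1[OF m] vt_inv2[OF m] part1[OF assms] part2[OF m] by auto
qed


end
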